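(* Let $F$ be a finite-dimensional subspace of $c_0$. Then there exists $k\in\mathbb N$ such that $F$ has property-$(k-U)$ in $c_0$.
   Context: $c_0$ carries the sup norm. For a closed subspace $Y$ of $X$ and $y^*\in Y^*$, $HB(y^* )=\{x^*\in X^*:x^*|_Y=y^*,\ \|x^*\|=\|y^*\|\}$; for a set $A$ and $a\in A$, $\dim A=\dim\operatorname{span}(A-a)$. $Y$ has property-$(k-U)$ in $X$ if $\dim HB(y^* )\le k-1$ for all $y^*\in S_{Y^*}$. *)

theory Defs
  imports "HOL-Analysis.Analysis"
begin

typedef c0 = "{f :: nat \<Rightarrow>\<^sub>C real. (\<lambda>n. apply_bcontfun f n) \<longlonglongrightarrow> 0}"
  morphisms Rep_c0 Abs_c0
  by (rule exI[of _ 0]) simp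

setup_lifting type_definition_c0

instantiation c0 :: real_vector
begin
lift_definition zero_c0 :: c0 is "0" by simp
lift_definition plus_c0 :: "c0 \<Rightarrow> c0 \<Rightarrow> c0" is "(+)"
  by (simp add: tendsto_add_zero)
lift_definition minus_c0 :: "c0 \<Rightarrow> c0 \<Rightarrow> c0" is "(-)"
  by (simp add: tendsto_diff[where a=0 and b=0, simplified])
lift_definition uminus_c0 :: "c0 \<Rightarrow> c0" is "uminus"
  by (simp add: tendsto_minus[where a=0, simplified])
lift_definition scaleR_c0 :: "real \<Rightarrow> c0 \<Rightarrow> c0" is "scaleR"
  by (simp add: tendsto_mult_right_zero)
instance
  by standard (transfer; simp add: algebra_simps scaleR_add_right scaleR_add_left)+
end

instantiation c0 :: real_normed_vector
begin
lift_definition norm_c0 :: "c0 \<Rightarrow> real" is "norm" .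
definition dist_c0 :: "c0 \<Rightarrow> c0 \<Rightarrow> real" where "dist_c0 x y = norm (x - y)"
definition sgn_c0 :: "c0 \<Rightarrow> c0" where "sgn_c0 x = x /\<^sub>R norm x"
definition uniformity_c0 :: "(c0 \<times> c0) filter"
  where "uniformity_c0 = (INF e\<in>{0<..}. principal {(x, y). dist x y < e})"
definition open_c0 :: "c0 set \<Rightarrow> bool"
  where "open_c0 U = (\<forall>x\<in>U. \<forall>\<^sub>F (x', y) in uniformity. x' = x \<longrightarrow> y \<in> U)"
instance
proof
  fix x y :: c0 and a :: real and U :: "c0 set"
  show "dist x y = norm (x - y)" by (simp add: dist_c0_def)
  show "sgn x = x /\<^sub>R norm x" by (simp add: sgn_c0_def)
  show "(uniformity :: (c0 \<times> c0) filter) = (INF e\<in>{0<..}. principal {(x, y). dist x y < e})"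
    by (simp add: uniformity_c0_def)
  show "open U = (\<forall>x\<in>U. \<forall>\<^sub>F (x', y) in uniformity. x' = x \<longrightarrow> y \<in> U)"
    by (simp add: open_c0_def)
  show "(norm x = 0) = (x = 0)" by transfer simp
  show "norm (x + y) \<le> norm x + norm y" by transfer (rule norm_triangle_ineq)
  show "norm (a *\<^sub>R x) = \<bar>a\<bar> * norm x" by transfer simp
qed
end

definition fnorm_on :: "c0 set \<Rightarrow> (c0 \<Rightarrow> real) \<Rightarrow> real" where
  "fnorm_on Y g = Sup {\<bar>g y\<bar> | y. y \<in> Y \<and> norm y \<le> 1}"

definition in_dual_on :: "c0 set \<Rightarrow> (c0 \<Rightarrow> real) \<Rightarrow> bool" where
  "in_dual_on Y g \<longleftrightarrow>
     (\<forall>x\<in>Y. \<forall>y\<in>Y. g (x + y) = g x + g y) \<and>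
     (\<forall>c. \<forall>x\<in>Y. g (c *\<^sub>R x) = c * g x) \<and>
     (\<exists>K. \<forall>x\<in>Y. \<bar>g x\<bar> \<le> K * norm x)"

definition dual_sphere :: "c0 set \<Rightarrow> (c0 \<Rightarrow> real) set" where
  "dual_sphere Y = {g. in_dual_on Y g \<and> fnorm_on Y g = 1}"

definition HB :: "c0 set \<Rightarrow> (c0 \<Rightarrow> real) \<Rightarrow> (c0 \<Rightarrow>\<^sub>L real) set" where
  "HB Y g = {x. (\<forall>y\<in>Y. blinfun_apply x y = g y) \<and> norm x = fnorm_on Y g}"

text \<open>dim A \<le> m, where dim A = dim span (A - a) for a \<in> A (possibly infinite).\<close>
definition set_dim_le :: "'a::real_vector set \<Rightarrow> nat \<Rightarrow> bool" where
  "set_dim_le A m \<longleftrightarrow> (\<forall>a\<in>A.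
      (\<exists>B. finite B \<and> span B = span ((\<lambda>x. x - a) ` A)) \<and>
      dim (span ((\<lambda>x. x - a) ` A)) \<le> m)"

definition property_kU :: "nat \<Rightarrow> c0 set \<Rightarrow> bool" where
  "property_kU k Y \<longleftrightarrow> (\<forall>g\<in>dual_sphere Y. set_dim_le (HB Y g) (k - 1))"

end

theory Submission
  imports Defs
begin

definition cc :: "c0 \<Rightarrow> nat \<Rightarrow> real" where
  "cc x n = apply_bcontfun (Rep_c0 x) n"

lemma cc_add[simp]: "cc (x + y) n = cc x n + cc y n"
  by (simp add: cc_def plus_c0.rep_eq)
lemma cc_diff[simp]: "cc (x - y) n = cc x n - cc y n"
  by (simp add: cc_def minus_c0.rep_eq)
lemma cc_minus[simp]: "cc (- x) n = - cc x n"
  by (simp add: cc_def uminus_c0.rep_eq)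
lemma cc_scale[simp]: "cc (c *\<^sub>R x) n = c * cc x n"
  by (simp add: cc_def scaleR_c0.rep_eq)
lemma cc_zero[simp]: "cc 0 n = 0"
  by (simp add: cc_def zero_c0.rep_eq)
lemma cc_le_norm: "\<bar>cc x n\<bar> \<le> norm x"
  using norm_bounded[of "Rep_c0 x" n] by (simp add: cc_def norm_c0.rep_eq)
lemma norm_le_cc: "(\<And>n. \<bar>cc x n\<bar> \<le> b) \<Longrightarrow> norm x \<le> b"
  using norm_bound[of "Rep_c0 x" b] by (simp add: cc_def norm_c0.rep_eq)
lemma cc_tendsto: "cc x \<longlonglongrightarrow> 0"
proof -
  have "cc x = apply_bcontfun (Rep_c0 x)" by (rule ext) (simp add: cc_def)
  then show ?thesis using Rep_c0[of x] by simp
qed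
lemma cc_eqI: "(\<And>n. cc x n = cc y n) \<Longrightarrow> x = y"
  by (metis Rep_c0_inject bcontfun_eqI cc_def)

lemma bl_cc: "bounded_linear (\<lambda>x. cc x n)"
  by (rule bounded_linear_intro[where K=1]) (auto simp: cc_le_norm)

lemma cc_sum: "cc (sum f S) n = (\<Sum>i\<in>S. cc (f i) n)"
  using linear_sum[OF bounded_linear.linear[OF bl_cc[of n]]] by simp

definition ev :: "nat \<Rightarrow> c0" where
  "ev k = Abs_c0 (Bcontfun (\<lambda>m. if m = k then 1 else 0))"

lemma cc_ev: "cc (ev k) n = (if n = k then 1 else 0)"
proof -
  have b: "(\<lambda>m::nat. if m = k then 1 else (0::real)) \<in> bcontfun"
    by (rule bcontfun_normI[where b=1]) auto
  have t: "(\<lambda>m::nat. if m = k then 1 else (0::real)) \<longlonglongrightarrow> 0"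
    by (rule tendsto_eventually) (auto simp: eventually_sequentially intro!: exI[of _ "Suc k"])
  have "Bcontfun (\<lambda>m. if m = k then 1 else 0) \<in> {f :: nat \<Rightarrow>\<^sub>C real. (\<lambda>n. apply_bcontfun f n) \<longlonglongrightarrow> 0}"
    using b t by (simp add: Bcontfun_inverse)
  then show ?thesis
    using b by (simp add: ev_def cc_def Abs_c0_inverse Bcontfun_inverse)
qed

definition pr :: "nat \<Rightarrow> c0 \<Rightarrow>\<^sub>L real" where
  "pr n = Blinfun (\<lambda>x. cc x n)"

lemma pr_apply[simp]: "blinfun_apply (pr n) x = cc x n"
  by (simp add: pr_def bounded_linear_Blinfun_apply[OF bl_cc])


lemma sep_bound:
  assumes "closed S" "subspace S" "a \<notin> S"
  obtains d where "d > 0" "\<And>w t. w \<in> S \<Longrightarrow> \<bar>t\<bar> * d \<le> norm (w + t *\<^sub>R a)"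
proof -
  have "open (- S)" using assms(1) by (simp add: open_Compl)
  then obtain d where d: "d > 0" "ball a d \<subseteq> - S"
    using assms(3) open_contains_ball by blast
  have key: "\<bar>t\<bar> * d \<le> norm (w + t *\<^sub>R a)" if w: "w \<in> S" for w t
  proof (cases "t = 0")
    case True then show ?thesis by simp
  next
    case False
    have "- (1/t) *\<^sub>R w \<in> S" using w assms(2) by (simp add: subspace_neg subspace_scale)
    then have "- (1/t) *\<^sub>R w \<notin> ball a d" using d by blast
    then have "d \<le> norm (a - (- (1/t) *\<^sub>R w))" by (simp add: dist_norm)
    also have "a - (- (1/t) *\<^sub>R w) = (1/t) *\<^sub>R (w + t *\<^sub>R a)"
      using False by (simp add: algebra_simps)
    finally have "d \<le> norm (w + t *\<^sub>R a) / \<bar>t\<bar>" by simp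
    then show ?thesis using False by (simp add: field_simps)
  qed
  show ?thesis using that d(1) key by blast
qed

lemma tail_lemma:
  assumes "finite B"
  shows "closed (span B) \<and> (\<forall>e>0. \<exists>N. \<forall>y\<in>span B. \<forall>n\<ge>N. \<bar>cc y n\<bar> \<le> e * norm y)"
  using assms
proof (induction B rule: finite_induct)
  case empty
  then show ?case by simp
next
  case (insert a B)
  show ?case
  proof (cases "a \<in> span B")
    case True
    then have "span (insert a B) = span B" by (simp add: span_redundant)
    then show ?thesis using insert.IH by simp
  next
    case False
    from insert.IH have cl: "closed (span B)" and tl: "\<forall>e>0. \<exists>N. \<forall>y\<in>span B. \<forall>n\<ge>N. \<bar>cc y n\<bar> \<le> e * norm y"
      by auto
    obtain d where d: "d > 0" "\<And>w t. w \<in> span B \<Longrightarrow> \<bar>t\<bar> * d \<le> norm (w + t *\<^sub>R a)"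
      using sep_bound[OF cl subspace_span False] by blast
    have tb: "\<bar>t\<bar> * d \<le> norm y" if "y - t *\<^sub>R a \<in> span B" for y t
      using d(2)[OF that, of t] by simp
    have clo: "closed (span (insert a B))"
      unfolding closed_sequential_limits
    proof (intro allI impI, elim conjE)
      fix x l assume xs: "\<forall>n. x n \<in> span (insert a B)" and xl: "x \<longlonglongrightarrow> l"
      have ex: "\<forall>n. \<exists>k. x n - k *\<^sub>R a \<in> span B"
        using xs unfolding span_breakdown_eq by blast
      obtain t where t: "\<And>n. x n - t n *\<^sub>R a \<in> span B"
        using choice[OF ex] by blast
      have "Cauchy x" using xl by (rule LIMSEQ_imp_Cauchy)
      have "Cauchy t"
      proof (rule metric_CauchyI)
        fix e :: real assume "e > 0"
        then have "e * d > 0" using d by simp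
        then obtain M where M: "\<And>m n. m \<ge> M \<Longrightarrow> n \<ge> M \<Longrightarrow> dist (x m) (x n) < e * d"
          using \<open>Cauchy x\<close> unfolding Cauchy_def by meson
        show "\<exists>M. \<forall>m\<ge>M. \<forall>n\<ge>M. dist (t m) (t n) < e"
        proof (intro exI allI impI)
          fix m n assume "m \<ge> M" "n \<ge> M"
          have "(x m - x n) - (t m - t n) *\<^sub>R a = (x m - t m *\<^sub>R a) - (x n - t n *\<^sub>R a)"
            by (simp add: algebra_simps)
          also have "\<dots> \<in> span B" using t by (simp add: span_diff)
          finally have "\<bar>t m - t n\<bar> * d \<le> norm (x m - x n)" by (rule tb)
          also have "\<dots> < e * d" using M[OF \<open>m \<ge> M\<close> \<open>n \<ge> M\<close>] by (simp add: dist_norm)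
          finally show "dist (t m) (t n) < e" using d(1) by (simp add: dist_real_def)
        qed
      qed
      then obtain s where ts: "t \<longlonglongrightarrow> s" using Cauchy_convergent_iff convergent_def by blast
      have lim: "(\<lambda>n. x n - t n *\<^sub>R a) \<longlonglongrightarrow> l - s *\<^sub>R a"
        using tendsto_diff[OF xl tendsto_scaleR[OF ts tendsto_const]] .
      have cs: "\<forall>x l. (\<forall>n. x n \<in> span B) \<and> x \<longlonglongrightarrow> l \<longrightarrow> l \<in> span B"
        using cl by (simp add: closed_sequential_limits)
      have "l - s *\<^sub>R a \<in> span B"
        using cs[rule_format, of "\<lambda>n. x n - t n *\<^sub>R a" "l - s *\<^sub>R a"] t lim by blast
      then show "l \<in> span (insert a B)" unfolding span_breakdown_eq by blast
    qed
    have tail: "\<exists>N. \<forall>y\<in>span (insert a B). \<forall>n\<ge>N. \<bar>cc y n\<bar> \<le> e * norm y" if e: "e > 0" for e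
    proof -
      define M where "M = 1 + norm a / d"
      have M1: "M \<ge> 1" using d(1) by (simp add: M_def)
      obtain N1 where N1: "\<And>y n. y \<in> span B \<Longrightarrow> n \<ge> N1 \<Longrightarrow> \<bar>cc y n\<bar> \<le> (e / (2*M)) * norm y"
      proof -
        have "e / (2*M) > 0" using e M1 by simp
        then show ?thesis using tl that by blast
      qed
      have "e * d / 2 > 0" using e d by simp
      then obtain N2 where N2: "\<And>n. n \<ge> N2 \<Longrightarrow> \<bar>cc a n\<bar> < e * d / 2"
      proof -
        have "\<forall>r>0. \<exists>no. \<forall>n\<ge>no. \<bar>cc a n\<bar> < r"
          using cc_tendsto[of a] unfolding LIMSEQ_def by (simp add: dist_real_def)
        then show ?thesis using \<open>e * d / 2 > 0\<close> that by blast
      qed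
      show ?thesis
      proof (intro exI ballI allI impI)
        fix y n assume y: "y \<in> span (insert a B)" and n: "max N1 N2 \<le> n"
        obtain t where t: "y - t *\<^sub>R a \<in> span B" using y unfolding span_breakdown_eq by blast
        define w where "w = y - t *\<^sub>R a"
        have tle: "\<bar>t\<bar> * d \<le> norm y" using tb[OF t] .
        have "norm w \<le> norm y + \<bar>t\<bar> * norm a"
          unfolding w_def using norm_triangle_ineq4[of y "t *\<^sub>R a"] by simp
        also have "\<bar>t\<bar> * norm a \<le> norm y / d * norm a"
          using tle d(1) by (intro mult_right_mono) (simp_all add: field_simps)
        finally have nw: "norm w \<le> M * norm y" by (simp add: M_def algebra_simps)
        have "cc y n = cc w n + t * cc a n" by (simp add: w_def)
        then have "\<bar>cc y n\<bar> \<le> \<bar>cc w n\<bar> + \<bar>t\<bar> * \<bar>cc a n\<bar>" by (simp add: abs_mult[symmetric])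
        also have "\<bar>cc w n\<bar> \<le> (e / (2*M)) * norm w" using N1[of w n] t n by (simp add: w_def)
        also have "\<dots> \<le> (e / (2*M)) * (M * norm y)"
          using nw e M1 by (intro mult_left_mono) simp_all
        also have "\<dots> = e / 2 * norm y" using M1 by (simp add: field_simps)
        also have "\<bar>t\<bar> * \<bar>cc a n\<bar> \<le> (norm y / d) * (e * d / 2)"
          using tle d(1) N2[of n] n by (intro mult_mono) (simp_all add: field_simps)
        also have "(norm y / d) * (e * d / 2) = e / 2 * norm y" using d(1) by (simp add: field_simps)
        finally show "\<bar>cc y n\<bar> \<le> e * norm y" by simp
      qed
    qed
    show ?thesis using clo tail by blast
  qed
qed


lemma hb_vanish:
  assumes F: "subspace F"
    and N: "\<And>y n. y \<in> F \<Longrightarrow> n \<ge> N \<Longrightarrow> \<bar>cc y n\<bar> \<le> 1/2 * norm y"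
    and g: "g \<in> dual_sphere F" and x: "x \<in> HB F g"
    and z: "\<And>n. n < N \<Longrightarrow> cc z n = 0"
  shows "blinfun_apply x z = 0"
proof (rule ccontr)
  assume nz: "blinfun_apply x z \<noteq> 0"
  have gd: "in_dual_on F g" and g1: "fnorm_on F g = 1" using g by (auto simp: dual_sphere_def)
  have xF: "\<And>y. y \<in> F \<Longrightarrow> blinfun_apply x y = g y" and nx: "norm x = 1"
    using x g1 by (auto simp: HB_def)
  have "z \<noteq> 0" using nz by auto
  then have nzp: "norm z > 0" by simp
  define sg where "sg = sgn (blinfun_apply x z)"
  define w where "w = (sg / norm z) *\<^sub>R z"
  define c where "c = \<bar>blinfun_apply x z\<bar> / norm z"
  have c0: "c > 0" using nz nzp by (simp add: c_def)
  have xw: "blinfun_apply x w = c"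
    by (simp add: w_def c_def sg_def blinfun.scaleR_right abs_sgn sgn_mult_abs mult.commute)
  have nw: "norm w = 1" using nz nzp by (simp add: w_def sg_def abs_sgn)
  have wz: "\<And>n. n < N \<Longrightarrow> cc w n = 0" using z by (simp add: w_def)
  have wle: "\<And>n. \<bar>cc w n\<bar> \<le> 1" using cc_le_norm[of w] nw by simp
  define S where "S = {\<bar>g y\<bar> | y. y \<in> F \<and> norm y \<le> 1}"
  have Sne: "S \<noteq> {}" using F by (auto simp: S_def subspace_0 intro!: exI[of _ 0])
  obtain K where K: "\<And>y. y \<in> F \<Longrightarrow> \<bar>g y\<bar> \<le> K * norm y" using gd unfolding in_dual_on_def by blast
  have "bdd_above S"
  proof (rule bdd_aboveI[where M="\<bar>K\<bar>"])
    fix s assume "s \<in> S"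
    then obtain y where y: "y \<in> F" "norm y \<le> 1" "s = \<bar>g y\<bar>" by (auto simp: S_def)
    have "K * norm y \<le> \<bar>K\<bar> * 1"
      using y(2) by (metis abs_ge_self abs_ge_zero mult_left_mono norm_ge_zero order_trans mult_right_mono)
    then show "s \<le> \<bar>K\<bar>" using K[OF y(1)] y(3) by simp
  qed
  have "Sup S = 1" using g1 by (simp add: fnorm_on_def S_def)
  then have "1 - c/2 < Sup S" using c0 by simp
  then obtain s where "s \<in> S" "1 - c/2 < s" using less_cSup_iff[OF Sne \<open>bdd_above S\<close>] by blast
  then obtain y0 where y0: "y0 \<in> F" "norm y0 \<le> 1" "1 - c/2 < \<bar>g y0\<bar>" by (auto simp: S_def)
  have gneg: "g (- y0) = - g y0"
    using gd y0(1) unfolding in_dual_on_def by (metis scaleR_minus1_left mult_minus1)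
  obtain y where y: "y \<in> F" "norm y \<le> 1" "1 - c/2 < g y"
  proof (cases "g y0 \<ge> 0")
    case True then show ?thesis using that y0 by auto
  next
    case False then show ?thesis using that[of "- y0"] y0 gneg F by (auto simp: subspace_neg)
  qed
  define v where "v = y + (1/2) *\<^sub>R w"
  have "norm v \<le> 1"
  proof (rule norm_le_cc)
    fix n
    show "\<bar>cc v n\<bar> \<le> 1"
    proof (cases "n < N")
      case True then show ?thesis using wz[OF True] cc_le_norm[of y n] y(2) by (simp add: v_def)
    next
      case False
      then have "\<bar>cc y n\<bar> \<le> 1/2" using N[OF y(1), of n] y(2) by simp
      moreover have "\<bar>cc w n\<bar> \<le> 1" by (rule wle)
      ultimately show ?thesis by (simp add: v_def)
    qed
  qed
  have "blinfun_apply x v = g y + c / 2"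
    using xF[OF y(1)] xw by (simp add: v_def blinfun.add_right blinfun.scaleR_right)
  then have "blinfun_apply x v > 1" using y(3) by simp
  moreover have "\<bar>blinfun_apply x v\<bar> \<le> norm x * norm v"
    using norm_blinfun[of x v] by simp
  ultimately show False using nx \<open>norm v \<le> 1\<close> by simp
qed


lemma hb_repr:
  assumes z: "\<And>z. (\<And>n. n < N \<Longrightarrow> cc z n = 0) \<Longrightarrow> blinfun_apply x z = 0"
  shows "x = (\<Sum>n<N. blinfun_apply x (ev n) *\<^sub>R pr n)"
proof (rule blinfun_eqI)
  fix u
  define h where "h = (\<Sum>n<N. cc u n *\<^sub>R ev n)"
  have ch: "cc h m = (if m < N then cc u m else 0)" for m
    by (simp add: h_def cc_sum cc_ev if_distrib[of "\<lambda>t. _ * t"] cong: if_cong)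
  have "blinfun_apply x (u - h) = 0"
    by (rule z) (simp add: ch)
  then have "blinfun_apply x u = blinfun_apply x h"
    by (simp add: blinfun.diff_right)
  also have "\<dots> = (\<Sum>n<N. cc u n * blinfun_apply x (ev n))"
    by (simp add: h_def blinfun.sum_right blinfun.scaleR_right)
  also have "\<dots> = blinfun_apply (\<Sum>n<N. blinfun_apply x (ev n) *\<^sub>R pr n) u"
    by (simp add: blinfun.sum_left blinfun.scaleR_left mult.commute)
  finally show "blinfun_apply x u = blinfun_apply (\<Sum>n<N. blinfun_apply x (ev n) *\<^sub>R pr n) u" .
qed

theorem theorem4p14:
  fixes F :: "c0 set"
  assumes "subspace F"
    and "\<exists>B. finite B \<and> span B = F"
  shows "\<exists>k::nat. k \<ge> 1 \<and> property_kU k F"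
proof -
  obtain B where B: "finite B" "span B = F" using assms(2) by blast
  obtain N where N: "\<And>y n. y \<in> F \<Longrightarrow> n \<ge> N \<Longrightarrow> \<bar>cc y n\<bar> \<le> 1/2 * norm y"
    using tail_lemma[OF B(1)] B(2) by (metis divide_pos_pos zero_less_one zero_less_numeral)
  define P where "P = pr ` {..<N}"
  have fP: "finite P" and cP: "card P \<le> N" using card_image_le[of "{..<N}" pr] by (auto simp: P_def)
  have HBsub: "HB F g \<subseteq> span P" if g: "g \<in> dual_sphere F" for g
  proof
    fix x assume x: "x \<in> HB F g"
    have "x = (\<Sum>n<N. blinfun_apply x (ev n) *\<^sub>R pr n)"
      by (rule hb_repr, rule hb_vanish[OF assms(1) N g x]) auto
    also have "\<dots> \<in> span P"
      by (intro span_sum span_scale span_base) (auto simp: P_def)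
    finally show "x \<in> span P" .
  qed
  have "property_kU (N + 1) F"
    unfolding property_kU_def set_dim_le_def
  proof (intro ballI)
    fix g a assume g: "g \<in> dual_sphere F" and a: "a \<in> HB F g"
    define U where "U = span ((\<lambda>x. x - a) ` HB F g)"
    have "(\<lambda>x. x - a) ` HB F g \<subseteq> span P"
      using HBsub[OF g] a by (auto intro: span_diff)
    then have US: "U \<subseteq> span P" unfolding U_def by (simp add: span_minimal)
    obtain T where T: "T \<subseteq> U" "independent T" "U \<subseteq> span T" "card T = dim U"
      using basis_exists[of U] by blast
    have "finite T \<and> card T \<le> card P"
      using independent_span_bound[OF fP T(2)] T(1) US by blast
    moreover have "span T = U"
      using T(1,3) span_minimal[of T U] unfolding U_def by (auto simp: span_span)
    ultimately have "\<exists>B. finite B \<and> span B = U" by blast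
    moreover have "dim U \<le> N + 1 - 1" using T(4) \<open>finite T \<and> card T \<le> card P\<close> cP by simp
    ultimately show "(\<exists>B. finite B \<and> span B = span ((\<lambda>x. x - a) ` HB F g)) \<and>
       dim (span ((\<lambda>x. x - a) ` HB F g)) \<le> N + 1 - 1" unfolding U_def by blast
  qed
  then show ?thesis by (intro exI[of _ "N+1"]) simp
qed

end
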